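(* Let $G=(N,A)$ be an arc-compressed $s$-$t$ DAG. Then every arc $uv\in A$ that is an $s$-dominator is the immediate $s$-dominator of at least two of the arcs leaving $v$.
   Context: An $s$-$t$ DAG is a directed acyclic multigraph (parallel arcs allowed) with a unique source $s$ and a unique sink $t$ such that every node is reachable from $s$ and every node reaches $t$. It is arc-compressed if no node has both indegree exactly one and outdegree exactly one (i.e. every maximal path whose internal nodes have indegree and outdegree one consists of a single arc). An arc $ab$ $s$-dominates an arc $xy$ if $ab=xy$ or every $s$-$x$ path contains $ab$; it strictly $s$-dominates $xy$ if moreover $ab\neq xy$. An arc is an $s$-dominator if it strictly $s$-dominates some arc. The immediate $s$-dominator of an arc $xy$ having at least one strict $s$-dominator is the strict $s$-dominator of $xy$ that is $s$-dominated by all strict $s$-dominators of $xy$. *)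

theory Defs
  imports Main
begin

text \<open>A directed multigraph is given by a node set N, an arc set A (arcs are
  abstract objects, so parallel arcs are allowed) and functions tail, head giving
  the tail and head of each arc.\<close>

definition is_path :: "'e set \<Rightarrow> ('e \<Rightarrow> 'v) \<Rightarrow> ('e \<Rightarrow> 'v) \<Rightarrow> 'v \<Rightarrow> 'v \<Rightarrow> 'e list \<Rightarrow> bool" where
  "is_path A tail head x y p \<longleftrightarrow>
     set p \<subseteq> A \<and>
     (\<forall>i. Suc i < length p \<longrightarrow> head (p ! i) = tail (p ! Suc i)) \<and>
     (if p = [] then x = y else tail (p ! 0) = x \<and> head (last p) = y)"

definition indeg :: "'e set \<Rightarrow> ('e \<Rightarrow> 'v) \<Rightarrow> 'v \<Rightarrow> nat" where
  "indeg A head v = card {a \<in> A. head a = v}"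

definition outdeg :: "'e set \<Rightarrow> ('e \<Rightarrow> 'v) \<Rightarrow> 'v \<Rightarrow> nat" where
  "outdeg A tail v = card {a \<in> A. tail a = v}"

definition st_dag :: "'v set \<Rightarrow> 'e set \<Rightarrow> ('e \<Rightarrow> 'v) \<Rightarrow> ('e \<Rightarrow> 'v) \<Rightarrow> 'v \<Rightarrow> 'v \<Rightarrow> bool" where
  "st_dag N A tail head s t \<longleftrightarrow>
     finite N \<and> finite A \<and>
     (\<forall>a\<in>A. tail a \<in> N \<and> head a \<in> N) \<and>
     s \<in> N \<and> t \<in> N \<and>
     \<comment> \<open>acyclic: no nonempty closed walk\<close>
     (\<forall>x p. is_path A tail head x x p \<longrightarrow> p = []) \<and>
     \<comment> \<open>s is the unique source, t the unique sink\<close>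
     (\<forall>v\<in>N. indeg A head v = 0 \<longleftrightarrow> v = s) \<and>
     (\<forall>v\<in>N. outdeg A tail v = 0 \<longleftrightarrow> v = t) \<and>
     \<comment> \<open>every node reachable from s and reaches t\<close>
     (\<forall>v\<in>N. (\<exists>p. is_path A tail head s v p) \<and> (\<exists>p. is_path A tail head v t p))"

definition arc_compressed :: "'v set \<Rightarrow> 'e set \<Rightarrow> ('e \<Rightarrow> 'v) \<Rightarrow> ('e \<Rightarrow> 'v) \<Rightarrow> bool" where
  "arc_compressed N A tail head \<longleftrightarrow>
     (\<forall>v\<in>N. \<not> (indeg A head v = 1 \<and> outdeg A tail v = 1))"

definition s_dom :: "'e set \<Rightarrow> ('e \<Rightarrow> 'v) \<Rightarrow> ('e \<Rightarrow> 'v) \<Rightarrow> 'v \<Rightarrow> 'e \<Rightarrow> 'e \<Rightarrow> bool" where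
  "s_dom A tail head s ab xy \<longleftrightarrow>
     ab = xy \<or> (\<forall>p. is_path A tail head s (tail xy) p \<longrightarrow> ab \<in> set p)"

definition strict_s_dom :: "'e set \<Rightarrow> ('e \<Rightarrow> 'v) \<Rightarrow> ('e \<Rightarrow> 'v) \<Rightarrow> 'v \<Rightarrow> 'e \<Rightarrow> 'e \<Rightarrow> bool" where
  "strict_s_dom A tail head s ab xy \<longleftrightarrow> s_dom A tail head s ab xy \<and> ab \<noteq> xy"

definition is_s_dominator :: "'e set \<Rightarrow> ('e \<Rightarrow> 'v) \<Rightarrow> ('e \<Rightarrow> 'v) \<Rightarrow> 'v \<Rightarrow> 'e \<Rightarrow> bool" where
  "is_s_dominator A tail head s ab \<longleftrightarrow> (\<exists>xy\<in>A. strict_s_dom A tail head s ab xy)"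

definition immediate_s_dom :: "'e set \<Rightarrow> ('e \<Rightarrow> 'v) \<Rightarrow> ('e \<Rightarrow> 'v) \<Rightarrow> 'v \<Rightarrow> 'e \<Rightarrow> 'e \<Rightarrow> bool" where
  "immediate_s_dom A tail head s ab xy \<longleftrightarrow>
     ab \<in> A \<and> strict_s_dom A tail head s ab xy \<and>
     (\<forall>c\<in>A. strict_s_dom A tail head s c xy \<longrightarrow> s_dom A tail head s c ab)"

end

theory Submission
  imports Defs
begin

lemma path_Nil[simp]: "is_path A tail head x y [] \<longleftrightarrow> x = y"
  by (simp add: is_path_def)

lemma path_Cons[simp]: "is_path A tail head x y (a # p) \<longleftrightarrow>
   a \<in> A \<and> tail a = x \<and> is_path A tail head (head a) y p"
proof (cases p)
  case Nil
  then show ?thesis by (auto simp: is_path_def)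
next
  case (Cons b q)
  show ?thesis
  proof
    assume h: "is_path A tail head x y (a # p)"
    have "head a = tail (p ! 0)" using h Cons unfolding is_path_def
      by (metis One_nat_def length_Cons less_Suc_eq_0_disj nth_Cons_0 nth_Cons_Suc zero_less_Suc)
    moreover have "\<forall>i. Suc i < length p \<longrightarrow> head (p ! i) = tail (p ! Suc i)"
    proof (intro allI impI)
      fix i assume "Suc i < length p"
      then have "Suc (Suc i) < length (a#p)" by simp
      then show "head (p ! i) = tail (p ! Suc i)" using h unfolding is_path_def
        by (metis nth_Cons_Suc)
    qed
    ultimately show "a \<in> A \<and> tail a = x \<and> is_path A tail head (head a) y p"
      using h Cons unfolding is_path_def by auto
  next
    assume h: "a \<in> A \<and> tail a = x \<and> is_path A tail head (head a) y p"
    have "\<forall>i. Suc i < length (a#p) \<longrightarrow> head ((a#p) ! i) = tail ((a#p) ! Suc i)"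
    proof (intro allI impI)
      fix i assume i: "Suc i < length (a#p)"
      show "head ((a#p) ! i) = tail ((a#p) ! Suc i)"
      proof (cases i)
        case 0
        then show ?thesis using h Cons unfolding is_path_def by auto
      next
        case (Suc j)
        then show ?thesis using h i unfolding is_path_def by auto
      qed
    qed
    then show "is_path A tail head x y (a # p)" using h Cons unfolding is_path_def by auto
  qed
qed

lemma path_append: "is_path A tail head x z (p @ q) \<longleftrightarrow>
   (\<exists>y. is_path A tail head x y p \<and> is_path A tail head y z q)"
  by (induction p arbitrary: x) auto

lemma path_split:
  assumes "is_path A tail head x y p" "a \<in> set p"
  obtains p1 p2 where "p = p1 @ a # p2" "is_path A tail head x (tail a) p1"
    "is_path A tail head (head a) y p2" "a \<in> A"
proof -
  obtain p1 p2 where pp: "p = p1 @ a # p2" using assms(2) by (meson split_list)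
  then show ?thesis using assms(1) that by (auto simp: path_append)
qed

theorem lemma6:
  assumes "st_dag N A tail head s t"
    and "arc_compressed N A tail head"
    and "uv \<in> A"
    and "is_s_dominator A tail head s uv"
  shows "\<exists>e1\<in>A. \<exists>e2\<in>A. e1 \<noteq> e2 \<and> tail e1 = head uv \<and> tail e2 = head uv \<and>
           immediate_s_dom A tail head s uv e1 \<and> immediate_s_dom A tail head s uv e2"
proof -
  define u where "u = tail uv"
  define v where "v = head uv"
  note G = assms(1)[unfolded st_dag_def]
  have acyc: "\<And>x p. is_path A tail head x x p \<Longrightarrow> p = []" using G by blast
  have reach: "\<And>w. w \<in> N \<Longrightarrow> \<exists>p. is_path A tail head s w p" using G by blast
  have fin: "finite A" using G by blast
  have uN: "u \<in> N" and vN: "v \<in> N" using G assms(3) u_def v_def by auto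
  obtain xy where xy: "xy \<in> A" "xy \<noteq> uv"
    "\<And>p. is_path A tail head s (tail xy) p \<Longrightarrow> uv \<in> set p"
    using assms(4) unfolding is_s_dominator_def strict_s_dom_def s_dom_def by blast
  have xN: "tail xy \<in> N" using G xy by auto
  obtain Q where Q: "is_path A tail head s (tail xy) Q" using reach xN by blast
  obtain Q1 Q2 where Q2: "is_path A tail head v (tail xy) Q2"
    using path_split[OF Q xy(3)[OF Q]] v_def by metis
  have domv: "uv \<in> set P" if P: "is_path A tail head s v P" for P
  proof (rule ccontr)
    assume nin: "uv \<notin> set P"
    have "is_path A tail head s (tail xy) (P @ Q2)" using P Q2 path_append by fast
    then have "uv \<in> set (P @ Q2)" by (rule xy(3))
    then have "uv \<in> set Q2" using nin by auto
    then obtain R1 R2 where "is_path A tail head v u R1"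
      using path_split[OF Q2] u_def by metis
    then have "is_path A tail head v v (R1 @ [uv])"
      using assms(3) u_def v_def by (auto simp: path_append)
    then show False using acyc by blast
  qed
  have uv_ne: "u \<noteq> v"
  proof
    assume "u = v"
    then have "is_path A tail head u u [uv]" using assms(3) u_def v_def by simp
    then show False using acyc by blast
  qed
  have in1: "{a \<in> A. head a = v} = {uv}"
  proof (intro equalityI subsetI)
    fix a assume a: "a \<in> {a \<in> A. head a = v}"
    show "a \<in> {uv}"
    proof (rule ccontr)
      assume ne: "a \<notin> {uv}"
      have "tail a \<in> N" using G a by auto
      then obtain R where R: "is_path A tail head s (tail a) R" using reach by blast
      have "is_path A tail head s v (R @ [a])" using R a by (auto simp: path_append)
      then have "uv \<in> set (R @ [a])" by (rule domv)
      then have "uv \<in> set R" using ne by auto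
      then obtain R2 where "is_path A tail head v (tail a) R2"
        using path_split[OF R] v_def by metis
      then have "is_path A tail head v v (R2 @ [a])" using a by (auto simp: path_append)
      then show False using acyc by blast
    qed
  qed (use assms(3) v_def in auto)
  have "indeg A head v = 1" unfolding indeg_def using in1 by simp
  then have od1: "outdeg A tail v \<noteq> 1" using assms(2) vN unfolding arc_compressed_def by blast
  define S where "S = {a \<in> A. tail a = v}"
  have finS: "finite S" using fin S_def by simp
  have Sne: "S \<noteq> {}"
  proof (cases Q2)
    case Nil
    then show ?thesis using Q2 xy S_def by auto
  next
    case (Cons b q)
    then show ?thesis using Q2 S_def by auto
  qed
  have c1: "card S \<noteq> 1" using od1 unfolding outdeg_def S_def by simp
  obtain e1 where e1: "e1 \<in> S" using Sne by blast
  have "S - {e1} \<noteq> {}"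
  proof
    assume "S - {e1} = {}"
    then have "S = {e1}" using e1 by blast
    then show False using c1 by simp
  qed
  then obtain e2 where "e2 \<in> S - {e1}" by blast
  then have e: "e1 \<in> S" "e2 \<in> S" "e1 \<noteq> e2" using e1 by auto
  have imm: "immediate_s_dom A tail head s uv e" if e: "e \<in> S" for e
  proof -
    have "e \<noteq> uv" using e S_def uv_ne u_def by auto
    moreover have sd: "s_dom A tail head s uv e" using e domv S_def unfolding s_dom_def by auto
    moreover have "s_dom A tail head s c uv" if c: "c \<in> A" "strict_s_dom A tail head s c e" for c
    proof (cases "c = uv")
      case True then show ?thesis by (simp add: s_dom_def)
    next
      case False
      have "c \<in> set P" if P: "is_path A tail head s u P" for P
      proof -
        have "is_path A tail head s v (P @ [uv])" using P assms(3) u_def v_def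
          by (auto simp: path_append)
        then have "c \<in> set (P @ [uv])" using c e S_def unfolding strict_s_dom_def s_dom_def by auto
        then show ?thesis using False by auto
      qed
      then show ?thesis unfolding s_dom_def u_def by auto
    qed
    ultimately show ?thesis unfolding immediate_s_dom_def using assms(3)
      by (simp add: strict_s_dom_def)
  qed
  have "e1 \<in> A" "e2 \<in> A" "tail e1 = head uv" "tail e2 = head uv"
    using e S_def v_def by auto
  then show ?thesis using e(3) imm[OF e(1)] imm[OF e(2)] by blast
qed

end
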